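(* There is no Abel universal function with Hadamard gaps; that is, no $f\in\mathcal{U}_A(\mathbb{D})$ has Hadamard gaps.
   Context: $\mathbb{D}$ is the open unit disc, $\mathbb{T}$ the unit circle. $\mathcal{U}_A(\mathbb{D})$ (the Abel universal functions) is the set of $f\in H(\mathbb{D})$ such that for every $\varepsilon>0$, every compact $K\subset\mathbb{T}$ with $K\ne\mathbb{T}$ and every continuous $\varphi$ on $K$, there is $r\in[0,1)$ with $\sup_{\zeta\in K}|f(r\zeta)-\varphi(\zeta)|\le\varepsilon$. A power series $f(z)=\sum_k a_kz^k$ with radius of convergence $1$ has Hadamard gaps if there is a sequence $(n_k)$ in $\mathbb{N}$ with $\inf_k n_{k+1}/n_k>1$ such that $a_j=0$ whenever $j\notin\{n_k:k\in\mathbb{N}\}$. *)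

theory Defs
  imports "HOL-Complex_Analysis.Complex_Analysis"
begin

definition abel_universal :: "(complex \<Rightarrow> complex) \<Rightarrow> bool" where
  "abel_universal f \<longleftrightarrow> f holomorphic_on ball 0 1 \<and>
     (\<forall>\<epsilon>>0. \<forall>K \<phi>. compact K \<and> K \<subseteq> sphere 0 1 \<and> K \<noteq> sphere 0 1 \<and> continuous_on K \<phi> \<longrightarrow>
        (\<exists>r. 0 \<le> r \<and> r < 1 \<and> (\<forall>z\<in>K. cmod (f (of_real r * z) - \<phi> z) \<le> \<epsilon>)))"

definition hadamard_gaps :: "(nat \<Rightarrow> complex) \<Rightarrow> bool" where
  "hadamard_gaps a \<longleftrightarrow> conv_radius a = 1 \<and>
     (\<exists>n :: nat \<Rightarrow> nat. \<exists>q :: real. q > 1 \<and> (\<forall>k. real (n (Suc k)) \<ge> q * real (n k)) \<and>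
        (\<forall>j. j \<notin> range n \<longrightarrow> a j = 0))"

end

theory Submission
  imports Defs
begin


definition Wf :: "real \<Rightarrow> int \<Rightarrow> real" where
  "Wf a d = (if d = 0 then 2 * a else 2 * sin (of_int d * a) / of_int d)"

lemma exp_integral:
  assumes "0 \<le> a"
  shows "((\<lambda>t. exp (\<i> * of_int d * of_real t)) has_integral complex_of_real (Wf a d)) {-a..a}"
proof (cases "d = 0")
  case True
  then show ?thesis using has_integral_const_real[of "1::complex" "-a" a] assms
    by (simp add: Wf_def scaleR_conv_of_real)
next
  case False
  let ?F = "\<lambda>z. exp (\<i> * of_int d * z) / (\<i> * of_int d)"
  have der: "((\<lambda>x. ?F (of_real x)) has_vector_derivative exp (\<i> * of_int d * of_real x)) (at x within {-a..a})" for x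
  proof (rule has_vector_derivative_real_field)
    show "(?F has_field_derivative exp (\<i> * of_int d * of_real x)) (at (of_real x))"
      using False by (auto intro!: derivative_eq_intros simp: field_simps)
  qed
  have "((\<lambda>t. exp (\<i> * of_int d * of_real t)) has_integral (?F (of_real a) - ?F (of_real (-a)))) {-a..a}"
    by (rule fundamental_theorem_of_calculus) (use assms der in auto)
  moreover have "?F (of_real a) - ?F (of_real (-a)) = complex_of_real (Wf a d)"
  proof -
    have e1: "exp (\<i> * of_int d * of_real a) = cis (of_int d * a)" by (simp add: cis_conv_exp mult.commute mult.left_commute)
    have e2: "exp (\<i> * of_int d * of_real (-a)) = cis (- (of_int d * a))" by (simp add: cis_conv_exp mult.commute mult.left_commute)
    show ?thesis using False unfolding e1 e2 Wf_def
      by (simp add: cis.ctr complex_eq_iff field_simps Complex_eq)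
  qed
  ultimately show ?thesis by simp
qed


lemma exp_prod_cnj:
  "exp (\<i> * of_nat m * of_real t) * cnj (exp (\<i> * of_nat l * of_real t)) =
   exp (\<i> * of_int (int m - int l) * of_real t)"
proof -
  have "cnj (exp (\<i> * of_nat l * of_real t)) = exp (- (\<i> * of_nat l * of_real t))"
    by (simp add: exp_cnj)
  then show ?thesis by (simp add: exp_add[symmetric] algebra_simps)
qed

lemma quad_integral:
  fixes c :: "nat \<Rightarrow> complex"
  assumes "finite F" "0 \<le> a"
  shows "((\<lambda>t. (cmod (\<Sum>m\<in>F. c m * exp (\<i> * of_nat m * of_real t)))\<^sup>2) has_integral
     (\<Sum>m\<in>F. \<Sum>l\<in>F. Re (c m * cnj (c l)) * Wf a (int m - int l))) {-a..a}"
proof -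
  let ?P = "\<lambda>t. \<Sum>m\<in>F. c m * exp (\<i> * of_nat m * of_real t)"
  have cI: "((\<lambda>t. \<Sum>m\<in>F. \<Sum>l\<in>F. c m * cnj (c l) * exp (\<i> * of_int (int m - int l) * of_real t)) has_integral
     (\<Sum>m\<in>F. \<Sum>l\<in>F. c m * cnj (c l) * complex_of_real (Wf a (int m - int l)))) {-a..a}"
    apply (rule has_integral_sum[OF assms(1)])
    apply (rule has_integral_sum[OF assms(1)])
    apply (rule has_integral_mult_right)
    apply (rule exp_integral[OF assms(2)])
    done
  have rI: "((Re \<circ> (\<lambda>t. \<Sum>m\<in>F. \<Sum>l\<in>F. c m * cnj (c l) * exp (\<i> * of_int (int m - int l) * of_real t))) has_integral
     Re (\<Sum>m\<in>F. \<Sum>l\<in>F. c m * cnj (c l) * complex_of_real (Wf a (int m - int l)))) {-a..a}"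
    by (rule has_integral_linear[OF cI bounded_linear_Re])
  have eq1: "Re (\<Sum>m\<in>F. \<Sum>l\<in>F. c m * cnj (c l) * complex_of_real (Wf a (int m - int l)))
     = (\<Sum>m\<in>F. \<Sum>l\<in>F. Re (c m * cnj (c l)) * Wf a (int m - int l))"
    by (simp add: Re_sum)
  have eq2: "(Re \<circ> (\<lambda>t. \<Sum>m\<in>F. \<Sum>l\<in>F. c m * cnj (c l) * exp (\<i> * of_int (int m - int l) * of_real t))) t
      = (cmod (?P t))\<^sup>2" for t
  proof -
    have "(cmod (?P t))\<^sup>2 = Re (?P t * cnj (?P t))"
      by (simp only: complex_norm_square[symmetric] Re_complex_of_real)
    also have "?P t * cnj (?P t) = (\<Sum>m\<in>F. \<Sum>l\<in>F. c m * exp (\<i> * of_nat m * of_real t) * cnj (c l * exp (\<i> * of_nat l * of_real t)))"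
      by (simp add: sum_distrib_left sum_distrib_right cnj_sum) (rule sum.swap)
    also have "\<dots> = (\<Sum>m\<in>F. \<Sum>l\<in>F. c m * cnj (c l) * exp (\<i> * of_int (int m - int l) * of_real t))"
    proof (rule sum.cong[OF refl], rule sum.cong[OF refl])
      fix m l
      have "c m * exp (\<i> * of_nat m * of_real t) * cnj (c l * exp (\<i> * of_nat l * of_real t))
          = c m * cnj (c l) * (exp (\<i> * of_nat m * of_real t) * cnj (exp (\<i> * of_nat l * of_real t)))"
        by (simp add: mult_ac)
      then show "c m * exp (\<i> * of_nat m * of_real t) * cnj (c l * exp (\<i> * of_nat l * of_real t))
          = c m * cnj (c l) * exp (\<i> * of_int (int m - int l) * of_real t)"
        by (simp only: exp_prod_cnj)
    qed
    finally show ?thesis by simp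
  qed
  show ?thesis using rI unfolding eq1 eq2 .
qed


lemma sum_swap_off:
  assumes "finite F"
  shows "(\<Sum>m\<in>F. \<Sum>l\<in>F-{m}. g m l) = (\<Sum>l\<in>F. \<Sum>m\<in>F-{l}. (g m l :: real))"
proof -
  have "(\<Sum>m\<in>F. \<Sum>l\<in>F-{m}. g m l) = (\<Sum>m\<in>F. \<Sum>l\<in>F. if l = m then 0 else g m l)"
    using assms by (auto intro!: sum.cong simp: sum.If_cases Diff_eq Int_commute)
  also have "\<dots> = (\<Sum>l\<in>F. \<Sum>m\<in>F. if l = m then 0 else g m l)" by (rule sum.swap)
  also have "\<dots> = (\<Sum>l\<in>F. \<Sum>m\<in>F-{l}. g m l)"
    using assms by (auto intro!: sum.cong simp: sum.If_cases Diff_eq Int_commute eq_commute)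
  finally show ?thesis .
qed

lemma quad_lower:
  fixes c :: "nat \<Rightarrow> complex" and W :: "int \<Rightarrow> real"
  assumes fin: "finite F" and W0: "W 0 = A" and sym: "\<And>d. \<bar>W (- d)\<bar> = \<bar>W d\<bar>"
    and row: "\<And>m. m \<in> F \<Longrightarrow> (\<Sum>l\<in>F-{m}. \<bar>W (int m - int l)\<bar>) \<le> B"
  shows "(\<Sum>m\<in>F. \<Sum>l\<in>F. Re (c m * cnj (c l)) * W (int m - int l)) \<ge> (A - B) * (\<Sum>m\<in>F. (cmod (c m))\<^sup>2)"
proof -
  let ?X = "\<lambda>m l. Re (c m * cnj (c l)) * W (int m - int l)"
  let ?G = "\<lambda>m l. ((cmod (c m))\<^sup>2 + (cmod (c l))\<^sup>2) / 2 * \<bar>W (int m - int l)\<bar>"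
  have split: "(\<Sum>m\<in>F. \<Sum>l\<in>F. ?X m l) = (\<Sum>m\<in>F. ?X m m + (\<Sum>l\<in>F-{m}. ?X m l))"
    by (rule sum.cong[OF refl]) (use fin in \<open>simp add: sum.remove\<close>)
  have diag: "?X m m = A * (cmod (c m))\<^sup>2" for m
    using W0 by (simp add: complex_mult_cnj cmod_def)
  have off: "?X m l \<ge> - ?G m l" for m l
  proof -
    have "\<bar>?X m l\<bar> \<le> cmod (c m) * cmod (c l) * \<bar>W (int m - int l)\<bar>"
    proof -
      have "\<bar>Re (c m * cnj (c l))\<bar> \<le> cmod (c m) * cmod (c l)"
        using abs_Re_le_cmod[of "c m * cnj (c l)"] by (simp add: norm_mult)
      then show ?thesis by (simp add: abs_mult mult_right_mono)
    qed
    moreover have "cmod (c m) * cmod (c l) \<le> ((cmod (c m))\<^sup>2 + (cmod (c l))\<^sup>2) / 2"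
      using sum_squares_bound[of "cmod (c m)" "cmod (c l)"] by simp
    then have "cmod (c m) * cmod (c l) * \<bar>W (int m - int l)\<bar> \<le> ?G m l"
      by (rule mult_right_mono) simp
    ultimately have "\<bar>?X m l\<bar> \<le> ?G m l" by linarith
    then show ?thesis by linarith
  qed
  have sumG: "(\<Sum>m\<in>F. \<Sum>l\<in>F-{m}. ?G m l) \<le> B * (\<Sum>m\<in>F. (cmod (c m))\<^sup>2)"
  proof -
    let ?R = "\<lambda>m. (\<Sum>l\<in>F-{m}. \<bar>W (int m - int l)\<bar>)"
    have symW: "\<bar>W (int m - int l)\<bar> = \<bar>W (int l - int m)\<bar>" for m l
      using sym[of "int l - int m"] by simp
    have G: "?G m l = (cmod (c m))\<^sup>2 / 2 * \<bar>W (int m - int l)\<bar> + (cmod (c l))\<^sup>2 / 2 * \<bar>W (int m - int l)\<bar>" for m l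
      by (simp add: add_divide_distrib distrib_right)
    have S1: "(\<Sum>m\<in>F. \<Sum>l\<in>F-{m}. (cmod (c m))\<^sup>2 / 2 * \<bar>W (int m - int l)\<bar>) = (\<Sum>m\<in>F. (cmod (c m))\<^sup>2 / 2 * ?R m)"
      by (simp only: sum_distrib_left)
    have "(\<Sum>m\<in>F. \<Sum>l\<in>F-{m}. (cmod (c l))\<^sup>2 / 2 * \<bar>W (int m - int l)\<bar>)
       = (\<Sum>l\<in>F. \<Sum>m\<in>F-{l}. (cmod (c l))\<^sup>2 / 2 * \<bar>W (int m - int l)\<bar>)"
      by (rule sum_swap_off[OF fin])
    also have "\<dots> = (\<Sum>l\<in>F. (cmod (c l))\<^sup>2 / 2 * ?R l)"
      by (simp only: sum_distrib_left symW[of _ "_"])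
    finally have S2: "(\<Sum>m\<in>F. \<Sum>l\<in>F-{m}. (cmod (c l))\<^sup>2 / 2 * \<bar>W (int m - int l)\<bar>) = (\<Sum>l\<in>F. (cmod (c l))\<^sup>2 / 2 * ?R l)" .
    have "(\<Sum>m\<in>F. \<Sum>l\<in>F-{m}. ?G m l) = (\<Sum>m\<in>F. (cmod (c m))\<^sup>2 / 2 * ?R m) + (\<Sum>l\<in>F. (cmod (c l))\<^sup>2 / 2 * ?R l)"
      unfolding G sum.distrib S1 S2 ..
    also have "\<dots> = (\<Sum>m\<in>F. (cmod (c m))\<^sup>2 * ?R m)"
      by (simp add: sum.distrib[symmetric])
    also have "\<dots> \<le> (\<Sum>m\<in>F. (cmod (c m))\<^sup>2 * B)"
      by (rule sum_mono) (use row in \<open>auto intro: mult_left_mono\<close>)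
    also have "\<dots> = B * (\<Sum>m\<in>F. (cmod (c m))\<^sup>2)"
      by (simp add: sum_distrib_left mult.commute)
    finally show ?thesis .
  qed
  have "(\<Sum>m\<in>F. \<Sum>l\<in>F. ?X m l) \<ge> (\<Sum>m\<in>F. A * (cmod (c m))\<^sup>2 - (\<Sum>l\<in>F-{m}. ?G m l))"
    unfolding split
  proof (rule sum_mono)
    fix m assume "m \<in> F"
    have "(\<Sum>l\<in>F-{m}. ?X m l) \<ge> (\<Sum>l\<in>F-{m}. - ?G m l)" by (rule sum_mono) (rule off)
    then show "A * (cmod (c m))\<^sup>2 - (\<Sum>l\<in>F-{m}. ?G m l) \<le> ?X m m + (\<Sum>l\<in>F-{m}. ?X m l)"
      unfolding diag[of m] sum_negf by linarith
  qed
  also have "(\<Sum>m\<in>F. A * (cmod (c m))\<^sup>2 - (\<Sum>l\<in>F-{m}. ?G m l)) =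
     A * (\<Sum>m\<in>F. (cmod (c m))\<^sup>2) - (\<Sum>m\<in>F. \<Sum>l\<in>F-{m}. ?G m l)"
    by (simp add: sum_subtractf sum_distrib_left)
  finally show ?thesis using sumG by (simp add: algebra_simps)
qed


lemma Wf_sym: "\<bar>Wf a (- d)\<bar> = \<bar>Wf a d\<bar>"
  by (simp add: Wf_def)

lemma Wf_bound1:
  assumes "d \<noteq> 0"
  shows "\<bar>Wf a d\<bar> \<le> 2 / \<bar>of_int d\<bar>"
  using assms abs_sin_le_one[of "of_int d * a"]
  by (auto simp: Wf_def abs_mult abs_divide divide_right_mono)

lemma Wf_bound2:
  assumes "d \<noteq> 0" "0 \<le> \<delta>"
  shows "\<bar>Wf (pi - \<delta>) d\<bar> \<le> 2 * \<delta>"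
proof -
  have "of_int d * (pi - \<delta>) = pi * of_int d - of_int d * \<delta>" by (simp add: algebra_simps)
  then have "sin (of_int d * (pi - \<delta>)) = sin (pi * of_int d) * cos (of_int d * \<delta>) - cos (pi * of_int d) * sin (of_int d * \<delta>)"
    by (simp only: sin_diff)
  then have "sin (of_int d * (pi - \<delta>)) = - cos (pi * of_int d) * sin (of_int d * \<delta>)"
    by (simp only: sin_npi_int) 
  then have "\<bar>sin (of_int d * (pi - \<delta>))\<bar> = \<bar>sin (of_int d * \<delta>)\<bar>"
    by (simp only: abs_mult abs_minus_cancel) (simp add: cos_npi_int)
  also have "\<dots> \<le> \<bar>of_int d\<bar> * \<delta>"
    using abs_sin_x_le_abs_x[of "of_int d * \<delta>"] assms by (simp add: abs_mult)
  finally have s: "\<bar>sin (of_int d * (pi - \<delta>))\<bar> \<le> \<bar>of_int d\<bar> * \<delta>" .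
  have "\<bar>Wf (pi - \<delta>) d\<bar> = 2 * \<bar>sin (of_int d * (pi - \<delta>))\<bar> / \<bar>of_int d\<bar>"
    using assms by (simp add: Wf_def abs_mult abs_divide)
  also have "\<dots> \<le> 2 * (\<bar>of_int d\<bar> * \<delta>) / \<bar>of_int d\<bar>"
    using s by (intro divide_right_mono mult_left_mono) auto
  also have "\<dots> = 2 * \<delta>" using assms by simp
  finally show ?thesis .
qed

lemma Wf_bound:
  assumes "d \<noteq> 0" "0 \<le> \<delta>"
  shows "\<bar>Wf (pi - \<delta>) d\<bar> \<le> 2 * sqrt (\<delta> / \<bar>of_int d\<bar>)"
proof -
  have "\<bar>Wf (pi - \<delta>) d\<bar>\<^sup>2 = \<bar>Wf (pi - \<delta>) d\<bar> * \<bar>Wf (pi - \<delta>) d\<bar>" by (simp add: power2_eq_square)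
  also have "\<dots> \<le> (2 * \<delta>) * (2 / \<bar>of_int d\<bar>)"
    using Wf_bound1[OF assms(1), of "pi - \<delta>"] Wf_bound2[OF assms] by (intro mult_mono) auto
  also have "\<dots> = (2 * sqrt (\<delta> / \<bar>of_int d\<bar>))\<^sup>2"
    using assms by (simp add: power_mult_distrib)
  finally show ?thesis
    by (rule power2_le_imp_le) (use assms in simp)
qed

locale lac =
  fixes n :: "nat \<Rightarrow> nat" and q :: real
  assumes q1: "q > 1" and gro: "\<And>k. real (n (Suc k)) \<ge> q * real (n k)"
begin

lemma mono_n: "mono n"
proof (rule incseq_SucI)
  fix k
  have "real (n k) \<le> q * real (n k)" using q1 by (simp add: mult_le_cancel_right1)
  also have "\<dots> \<le> real (n (Suc k))" by (rule gro)
  finally show "n k \<le> n (Suc k)" by simp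
qed

lemma lacunary:
  assumes "u \<in> range n" "v \<in> range n" "u < v"
  shows "q * real u \<le> real v"
proof -
  obtain i j where ij: "u = n i" "v = n j" using assms by auto
  have "i < j"
  proof (rule ccontr)
    assume "\<not> i < j"
    then have "n j \<le> n i" using mono_n by (simp add: monoD)
    then show False using assms ij by simp
  qed
  then have "n (Suc i) \<le> n j" using mono_n by (simp add: monoD)
  then show ?thesis using gro[of i] ij by simp
qed

lemma sqrt_sum:
  "finite F \<Longrightarrow> F \<subseteq> range n \<Longrightarrow> (\<forall>x\<in>F. 1 \<le> x) \<Longrightarrow> 0 < \<mu> \<Longrightarrow> (\<forall>x\<in>F. \<mu> \<le> real x) \<Longrightarrow>
    (\<Sum>x\<in>F. 1 / sqrt (real x)) \<le> (1 / sqrt \<mu>) / (1 - 1 / sqrt q)"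
proof (induct "card F" arbitrary: F \<mu> rule: less_induct)
  case less
  have sq: "sqrt q > 1" using q1 by simp
  have den: "0 < 1 - 1 / sqrt q" using sq by (simp add: field_simps)
  show ?case
  proof (cases "F = {}")
    case True
    then show ?thesis using den less.prems by simp
  next
    case False
    define m0 where "m0 = Min F"
    have m0F: "m0 \<in> F" using False less.prems(1) m0_def by simp
    have m0le: "\<forall>x\<in>F. m0 \<le> x" using less.prems(1) m0_def by simp
    define F' where "F' = F - {m0}"
    have cardF': "card F' < card F" unfolding F'_def by (rule card_Diff1_less[OF less.prems(1) m0F])
    have m01: "1 \<le> real m0" using less.prems(3) m0F by simp
    have qm: "\<forall>x\<in>F'. q * real m0 \<le> real x"
    proof
      fix x assume "x \<in> F'"
      then have "x \<in> F" "m0 < x" using m0le F'_def by force+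
      then show "q * real m0 \<le> real x" using lacunary m0F less.prems(2) by blast
    qed
    have qpos: "0 < q * real m0" using q1 m01 by simp
    have IH: "(\<Sum>x\<in>F'. 1 / sqrt (real x)) \<le> (1 / sqrt (q * real m0)) / (1 - 1 / sqrt q)"
      using less.hyps[OF cardF', of "q * real m0"] less.prems qm qpos F'_def by auto
    have "(\<Sum>x\<in>F. 1 / sqrt (real x)) = 1 / sqrt (real m0) + (\<Sum>x\<in>F'. 1 / sqrt (real x))"
      using m0F less.prems(1) F'_def by (simp add: sum.remove)
    also have "\<dots> \<le> 1 / sqrt (real m0) + (1 / sqrt (q * real m0)) / (1 - 1 / sqrt q)"
      using IH by simp
    also have "\<dots> = (1 / sqrt (real m0)) / (1 - 1 / sqrt q)"
      using sq m01 den by (simp add: real_sqrt_mult field_simps)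
    also have "\<dots> \<le> (1 / sqrt \<mu>) / (1 - 1 / sqrt q)"
      using less.prems(4,5) m0F den by (intro divide_right_mono) (auto simp: frac_le)
    finally show ?thesis .
  qed
qed

definition cq where "cq = 1 - 1 / q"
definition Lq where "Lq = 1 / (1 - 1 / sqrt q)"

lemma cq_pos: "0 < cq" "cq \<le> 1" using q1 by (auto simp: cq_def)

lemma gap:
  assumes "u \<in> insert 0 (range n)" "v \<in> insert 0 (range n)" "u < v"
  shows "cq * real v \<le> real v - real u"
proof (cases "u = 0")
  case True then show ?thesis using cq_pos mult_right_mono[of cq 1 "real v"] by simp
next
  case False
  then have "u \<in> range n" "v \<in> range n" using assms by auto
  then have "q * real u \<le> real v" using lacunary assms by blast
  then have "real u \<le> real v / q" using q1 by (simp add: field_simps)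
  then show ?thesis using q1 by (simp add: cq_def field_simps)
qed

lemma row_bound:
  assumes fin: "finite F" and FS: "F \<subseteq> insert 0 (range n)" and mF: "m \<in> F" and dpos: "0 < \<delta>"
  shows "(\<Sum>l\<in>F-{m}. \<bar>Wf (pi - \<delta>) (int m - int l)\<bar>) \<le> 2 * sqrt (\<delta> / cq) * (1 + Lq)"
proof -
  define g where "g l = (if l = 0 then 1 else 1 / sqrt (real l))" for l :: nat
  have tb: "\<bar>Wf (pi - \<delta>) (int m - int l)\<bar> \<le> 2 * sqrt (\<delta> / cq) * g l" if l: "l \<in> F - {m}" for l
  proof -
    have lS: "l \<in> insert 0 (range n)" and mS: "m \<in> insert 0 (range n)" and lm: "l \<noteq> m"
      using l mF FS by auto
    have dne: "int m - int l \<noteq> 0" using lm by simp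
    have dabs: "\<bar>real_of_int (int m - int l)\<bar> \<ge> cq * real (max m l)"
    proof (cases "l < m")
      case True then show ?thesis using gap[OF lS mS True] by (simp add: max_def)
    next
      case False then have "m < l" using lm by simp
      then show ?thesis using gap[OF mS lS] by (simp add: max_def)
    qed
    have d1: "\<bar>real_of_int (int m - int l)\<bar> \<ge> 1" using dne by linarith
    have W: "\<bar>Wf (pi - \<delta>) (int m - int l)\<bar> \<le> 2 * sqrt (\<delta> / \<bar>real_of_int (int m - int l)\<bar>)"
      using Wf_bound[OF dne, of \<delta>] dpos by simp
    show ?thesis
    proof (cases "l = 0")
      case True
      have "\<delta> / \<bar>real_of_int (int m - int l)\<bar> \<le> \<delta> / cq"
        using d1 cq_pos dpos by (intro divide_left_mono) auto
      then show ?thesis using W True g_def by (simp add: order_trans)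
    next
      case False
      have cl: "cq * real l \<le> \<bar>real_of_int (int m - int l)\<bar>"
        using dabs cq_pos by (smt (verit) max.cobounded2 mult_left_mono of_nat_le_iff)
      have lpos: "0 < cq * real l" using False cq_pos by simp
      have "\<delta> / \<bar>real_of_int (int m - int l)\<bar> \<le> \<delta> / (cq * real l)"
        using cl lpos dpos by (intro divide_left_mono) auto
      then have "sqrt (\<delta> / \<bar>real_of_int (int m - int l)\<bar>) \<le> sqrt (\<delta> / (cq * real l))"
        by (rule real_sqrt_le_mono)
      also have "\<dots> = sqrt (\<delta> / cq) * (1 / sqrt (real l))"
        by (simp add: real_sqrt_mult real_sqrt_divide)
      finally have "sqrt (\<delta> / \<bar>real_of_int (int m - int l)\<bar>) \<le> sqrt (\<delta> / cq) * (1 / sqrt (real l))" .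
      then show ?thesis using W False g_def by simp
    qed
  qed
  have "(\<Sum>l\<in>F-{m}. \<bar>Wf (pi - \<delta>) (int m - int l)\<bar>) \<le> (\<Sum>l\<in>F-{m}. 2 * sqrt (\<delta> / cq) * g l)"
    by (rule sum_mono) (rule tb)
  also have "\<dots> = 2 * sqrt (\<delta> / cq) * (\<Sum>l\<in>F-{m}. g l)" by (simp add: sum_distrib_left)
  also have "(\<Sum>l\<in>F-{m}. g l) \<le> 1 + Lq"
  proof -
    have gnn: "0 \<le> g l" for l by (simp add: g_def)
    have "(\<Sum>l\<in>F-{m}. g l) \<le> (\<Sum>l\<in>F. g l)"
      by (rule sum_mono2) (use fin gnn in auto)
    also have "\<dots> \<le> (\<Sum>l\<in>insert 0 (F - {0}). g l)"
      by (rule sum_mono2) (use fin gnn in auto)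
    also have "\<dots> = g 0 + (\<Sum>l\<in>F - {0}. g l)" using fin by (subst sum.insert) auto
    also have "g 0 = 1" by (simp add: g_def)
    also have "(\<Sum>l\<in>F - {0}. g l) = (\<Sum>l\<in>F - {0}. 1 / sqrt (real l))"
      by (rule sum.cong) (auto simp: g_def)
    also have "\<dots> \<le> (1 / sqrt 1) / (1 - 1 / sqrt q)"
      by (rule sqrt_sum) (use fin FS in auto)
    finally show ?thesis by (simp add: Lq_def)
  qed
  then have "2 * sqrt (\<delta> / cq) * (\<Sum>l\<in>F-{m}. g l) \<le> 2 * sqrt (\<delta> / cq) * (1 + Lq)"
    using dpos cq_pos by (intro mult_left_mono) auto
  finally show ?thesis .
qed

end


theorem corollary4p4:
  fixes f :: "complex \<Rightarrow> complex" and a :: "nat \<Rightarrow> complex"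
  assumes "\<forall>z\<in>ball 0 1. f z = (\<Sum>k. a k * z ^ k)"
    and "hadamard_gaps a"
  shows "\<not> abel_universal f"
proof
  assume AU: "abel_universal f"
  obtain n :: "nat \<Rightarrow> nat" and q :: real where cr: "conv_radius a = 1" and q1: "q > 1"
    and gro: "\<And>k. real (n (Suc k)) \<ge> q * real (n k)" and zero: "\<And>j. j \<notin> range n \<Longrightarrow> a j = 0"
    using assms(2) unfolding hadamard_gaps_def by blast
  interpret lac n q using q1 gro by unfold_locales auto
  define \<delta> where "\<delta> = cq / (4 * (1 + Lq)\<^sup>2)"
  have Lq_pos: "0 < Lq" using q1 by (simp add: Lq_def)
  have dpos: "0 < \<delta>" using cq_pos Lq_pos by (simp add: \<delta>_def)
  have dle: "\<delta> \<le> 1/4"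
  proof -
    have "1 \<le> (1 + Lq)\<^sup>2" using Lq_pos by (simp add: one_le_power)
    then have "cq / (4 * (1 + Lq)\<^sup>2) \<le> 1 / (4 * 1)" using cq_pos
      by (intro frac_le) auto
    then show ?thesis by (simp add: \<delta>_def)
  qed
  have B1: "2 * sqrt (\<delta> / cq) * (1 + Lq) = 1"
  proof -
    have "\<delta> / cq = 1 / (4 * (1 + Lq)\<^sup>2)" using cq_pos Lq_pos by (simp add: \<delta>_def)
    also have "\<dots> = (1 / (2 * (1 + Lq)))\<^sup>2" by (simp add: power2_eq_square algebra_simps)
    finally have "\<delta> / cq = (1 / (2 * (1 + Lq)))\<^sup>2" .
    then have "sqrt (\<delta> / cq) = 1 / (2 * (1 + Lq))" using Lq_pos by simp
    then show ?thesis using Lq_pos by simp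
  qed
  define \<alpha> where "\<alpha> = pi - \<delta>"
  have \<alpha>pos: "0 \<le> \<alpha>" using dle pi_gt3 by (simp add: \<alpha>_def)
  define K where "K = (\<lambda>t. exp (\<i> * of_real t)) ` {-\<alpha>..\<alpha>}"
  have Kc: "compact K" unfolding K_def
    by (rule compact_continuous_image) (auto intro!: continuous_intros)
  have Ks: "K \<subseteq> sphere 0 1" unfolding K_def by auto
  have Kne: "K \<noteq> sphere 0 1"
  proof
    assume "K = sphere 0 1"
    then have "-1 \<in> K" by simp
    then obtain t where t: "t \<in> {-\<alpha>..\<alpha>}" "exp (\<i> * of_real t) = -1" unfolding K_def by auto
    have "cos t = -1" using arg_cong[OF t(2), of Re] by (simp add: cis_conv_exp[symmetric])
    moreover have "cos pi < cos \<bar>t\<bar>"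
      using t(1) dpos by (intro cos_monotone_0_pi) (auto simp: \<alpha>_def)
    ultimately show False by simp
  qed
  obtain r where r: "0 \<le> r" "r < 1" and rK: "\<forall>z\<in>K. cmod (f (of_real r * z) - (a 0 - 1)) \<le> 1/4"
  proof -
    have "\<forall>\<epsilon>>0. \<forall>K \<phi>. compact K \<and> K \<subseteq> sphere 0 1 \<and> K \<noteq> sphere 0 1 \<and> continuous_on K \<phi> \<longrightarrow>
        (\<exists>r. 0 \<le> r \<and> r < 1 \<and> (\<forall>z\<in>K. cmod (f (of_real r * z) - \<phi> z) \<le> \<epsilon>))"
      using AU unfolding abel_universal_def by blast
    then have "\<exists>r. 0 \<le> r \<and> r < 1 \<and> (\<forall>z\<in>K. cmod (f (of_real r * z) - (\<lambda>_. a 0 - 1) z) \<le> 1/4)"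
      using Kc Ks Kne continuous_on_const[of K "a 0 - 1"] by (meson divide_pos_pos zero_less_one zero_less_numeral)
    then show ?thesis using that by auto
  qed
  define u where "u m = a m * of_real r ^ m" for m
  have sumu: "summable (\<lambda>m. norm (u m))"
    unfolding u_def by (rule abs_summable_in_conv_radius) (use r cr in simp)
  obtain N0 where N0: "\<forall>N\<ge>N0. norm (\<Sum>i. norm (u (i + N))) < 1/4"
    using suminf_exist_split[OF _ sumu, of "1/4"] by auto
  define N where "N = max N0 1"
  have N1: "1 \<le> N" and tailN: "(\<Sum>i. norm (u (i + N))) < 1/4"
    using N0[rule_format, of N] by (auto simp: N_def)
  define c where "c m = (if m = 0 then 1 else u m)" for m
  define F where "F = {m. m < N \<and> (m = 0 \<or> m \<in> range n)}"
  have finF: "finite F" unfolding F_def by simp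
  have F0: "0 \<in> F" using N1 by (simp add: F_def)
  have FS: "F \<subseteq> insert 0 (range n)" by (auto simp: F_def)
  define e where "e t m = exp (\<i> * of_nat m * of_real t)" for t :: real and m :: nat
  define P where "P t = (\<Sum>m\<in>F. c m * e t m)" for t
  have Pbound: "(cmod (P t))\<^sup>2 \<le> 1/4" if t: "t \<in> {-\<alpha>..\<alpha>}" for t
  proof -
    have ne: "norm (e t m) = 1" for m by (simp add: e_def)
    define v where "v m = u m * e t m" for m
    have nv: "norm (v m) = norm (u m)" for m by (simp add: v_def norm_mult ne)
    have sv: "summable v"
      by (rule summable_norm_cancel) (use sumu in \<open>simp add: nv\<close>)
    have z: "exp (\<i> * of_real t) \<in> K" using t by (auto simp: K_def)
    have "norm (of_real r * exp (\<i> * of_real t)) < 1" using r by (simp add: norm_mult)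
    then have fz: "f (of_real r * exp (\<i> * of_real t)) = (\<Sum>m. v m)"
      using assms(1) by (simp add: v_def u_def e_def power_mult_distrib exp_of_nat_mult[symmetric] mult_ac)
    have split: "(\<Sum>m. v m) = (\<Sum>i. v (i + N)) + (\<Sum>m<N. v m)"
      by (rule suminf_split_initial_segment[OF sv])
    have tail: "norm (\<Sum>i. v (i + N)) \<le> 1/4"
    proof -
      have s1: "summable (\<lambda>i. norm (u (i + N)))" using sumu by (rule summable_ignore_initial_segment)
      have "norm (\<Sum>i. v (i + N)) \<le> (\<Sum>i. norm (u (i + N)))"
        by (rule summable_norm[THEN order_trans]) (use s1 in \<open>simp_all add: nv\<close>)
      then show ?thesis using tailN by simp
    qed
    have PN: "P t = (\<Sum>m<N. v m) - a 0 + 1"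
    proof -
      have "P t = (\<Sum>m<N. c m * e t m)"
        unfolding P_def by (rule sum.mono_neutral_left) (auto simp: F_def c_def u_def zero)
      also have "\<dots> = c 0 * e t 0 + (\<Sum>m\<in>{..<N}-{0}. c m * e t m)"
        using N1 by (subst sum.remove[of _ 0]) auto
      also have "(\<Sum>m\<in>{..<N}-{0}. c m * e t m) = (\<Sum>m\<in>{..<N}-{0}. v m)"
        by (rule sum.cong) (auto simp: c_def v_def)
      also have "(\<Sum>m<N. v m) = v 0 + (\<Sum>m\<in>{..<N}-{0}. v m)"
        using N1 by (subst sum.remove[of _ 0]) auto
      ultimately show ?thesis by (simp add: c_def v_def u_def e_def)
    qed
    have "P t = f (of_real r * exp (\<i> * of_real t)) - (a 0 - 1) - (\<Sum>i. v (i + N))"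
      using fz split PN by simp
    then have "cmod (P t) \<le> 1/4 + 1/4"
      using rK z tail norm_triangle_ineq4[of "f (of_real r * exp (\<i> * of_real t)) - (a 0 - 1)" "\<Sum>i. v (i + N)"]
      by auto
    then have "(cmod (P t))\<^sup>2 \<le> (1/2)\<^sup>2" by (intro power_mono) auto
    then show ?thesis by (simp add: power2_eq_square)
  qed
  define Q where "Q = (\<Sum>m\<in>F. \<Sum>l\<in>F. Re (c m * cnj (c l)) * Wf \<alpha> (int m - int l))"
  have QI: "((\<lambda>t. (cmod (P t))\<^sup>2) has_integral Q) {-\<alpha>..\<alpha>}"
    unfolding P_def e_def Q_def by (rule quad_integral[OF finF \<alpha>pos])
  have Qup: "Q \<le> 2 * \<alpha> / 4"
  proof -
    have "Q \<le> Henstock_Kurzweil_Integration.content {-\<alpha>..\<alpha>} *\<^sub>R (1/4)"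
      by (rule has_integral_le[OF QI has_integral_const_real]) (use Pbound in auto)
    then show ?thesis using \<alpha>pos by simp
  qed
  have Qlow: "Q \<ge> (2 * \<alpha> - 1) * (\<Sum>m\<in>F. (cmod (c m))\<^sup>2)"
  proof -
    have "Q \<ge> (2 * \<alpha> - 2 * sqrt (\<delta> / cq) * (1 + Lq)) * (\<Sum>m\<in>F. (cmod (c m))\<^sup>2)"
      unfolding Q_def
    proof (rule quad_lower[OF finF])
      show "Wf \<alpha> 0 = 2 * \<alpha>" by (simp add: Wf_def)
      show "\<bar>Wf \<alpha> (- d)\<bar> = \<bar>Wf \<alpha> d\<bar>" for d by (rule Wf_sym)
      show "(\<Sum>l\<in>F-{m}. \<bar>Wf \<alpha> (int m - int l)\<bar>) \<le> 2 * sqrt (\<delta> / cq) * (1 + Lq)" if "m \<in> F" for m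
        unfolding \<alpha>_def by (rule row_bound[OF finF FS that dpos])
    qed
    then show ?thesis using B1 by simp
  qed
  have "(cmod (c 0))\<^sup>2 \<le> (\<Sum>m\<in>F. (cmod (c m))\<^sup>2)"
    by (rule member_le_sum[OF F0]) (use finF in auto)
  then have "1 \<le> (\<Sum>m\<in>F. (cmod (c m))\<^sup>2)" by (simp add: c_def)
  moreover have "2 * \<alpha> - 1 > 0" using dle pi_gt3 by (simp add: \<alpha>_def)
  ultimately have "2 * \<alpha> - 1 \<le> Q" using Qlow
    by (smt (verit) mult_left_mono mult.commute mult_cancel_right1)
  then have "\<alpha> \<le> 2/3" using Qup by simp
  then show False using dle pi_gt3 by (simp add: \<alpha>_def)
qed

end
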